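(* Let $\lambda=\bar p/(1-\bar p)$, $\pi=(1+\lambda)\mu(I-D_pK)$ and $\mathbf r=\big(I-K+\frac{(\mathbf 1-\mathbf p)\mu D_{1-p}K}{1-\bar p}\big)^{-1}\mathbf p-\lambda\mathbf 1$. Then $\pi\cdot\mathbf r=0$.
   Context: Let $\mathcal R=\{1,\dots,N\}$ and let $K$ be a stochastic matrix on $\mathcal R$ whose Markov chain has a unique closed irreducible subset; let $\mu$ (row vector) be its unique stationary distribution. Fix $p:\mathcal R\to(0,1)$, $\mathbf p=(p(1),\dots,p(N))^t$, $\mathbf 1$ the all-ones column vector, $I$ the identity, $D_p$ the diagonal matrix with entries $p(i)$, $D_{1-p}=I-D_p$, $\bar p=\mu\cdot\mathbf p$. *)

theory Defs
  imports "HOL-Analysis.Analysis"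
begin

text \<open>States R = {1..N} are modelled by a finite index type 'n. Row vectors
(distributions) and column vectors are both elements of real^'n; a row vector
times a matrix is v v* A, a matrix times a column vector is A *v x.\<close>

definition stochastic_matrix :: "real^'n^'n \<Rightarrow> bool" where
  "stochastic_matrix K \<longleftrightarrow> (\<forall>i j. 0 \<le> K$i$j) \<and> (\<forall>i. (\<Sum>j\<in>UNIV. K$i$j) = 1)"

definition trans_step :: "real^'n^'n \<Rightarrow> 'n \<Rightarrow> 'n \<Rightarrow> bool" where
  "trans_step K i j \<longleftrightarrow> 0 < K$i$j"

definition closed_set :: "real^'n^'n \<Rightarrow> 'n set \<Rightarrow> bool" where
  "closed_set K C \<longleftrightarrow> C \<noteq> {} \<and> (\<forall>i\<in>C. \<forall>j. trans_step K i j \<longrightarrow> j \<in> C)"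

definition irreducible_set :: "real^'n^'n \<Rightarrow> 'n set \<Rightarrow> bool" where
  "irreducible_set K C \<longleftrightarrow> (\<forall>i\<in>C. \<forall>j\<in>C. (trans_step K)\<^sup>*\<^sup>* i j)"

definition closed_irreducible :: "real^'n^'n \<Rightarrow> 'n set \<Rightarrow> bool" where
  "closed_irreducible K C \<longleftrightarrow> closed_set K C \<and> irreducible_set K C"

definition stationary_distribution :: "real^'n^'n \<Rightarrow> real^'n \<Rightarrow> bool" where
  "stationary_distribution K \<mu> \<longleftrightarrow>
     (\<forall>i. 0 \<le> \<mu>$i) \<and> (\<Sum>i\<in>UNIV. \<mu>$i) = 1 \<and> \<mu> v* K = \<mu>"

definition diag_mat :: "real^'n \<Rightarrow> real^'n^'n" where
  "diag_mat v = (\<chi> i j. if i = j then v$i else 0)"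

definition outer_prod :: "real^'n \<Rightarrow> real^'n \<Rightarrow> real^'n^'n" where
  "outer_prod u v = (\<chi> i j. u$i * v$j)"

end

theory Submission imports Defs begin

lemma closed_contains_ci:
  fixes K :: "real^'n^'n"
  assumes "closed_set K S"
  shows "\<exists>C\<subseteq>S. closed_irreducible K C"
proof -
  define R where "R i = {j. (trans_step K)\<^sup>*\<^sup>* i j}" for i
  have RS: "R i \<subseteq> S" if "i \<in> S" for i
  proof
    fix j assume "j \<in> R i"
    hence "(trans_step K)\<^sup>*\<^sup>* i j" by (simp add: R_def)
    thus "j \<in> S" using that
      by (induction rule: rtranclp_induct) (use assms in \<open>auto simp: closed_set_def\<close>)
  qed
  obtain i0 where "i0 \<in> S" using assms by (auto simp: closed_set_def)
  then obtain i where iS: "i \<in> S" and imin: "\<And>j. j \<in> S \<Longrightarrow> card (R i) \<le> card (R j)"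
    using ex_has_least_nat[of "\<lambda>i. i \<in> S" i0 "\<lambda>i. card (R i)"] by blast
  have sub: "R j \<subseteq> R i" if "j \<in> R i" for j
    using that by (auto simp: R_def)
  have bk: "i \<in> R j" if "j \<in> R i" for j
  proof -
    have "j \<in> S" using RS[OF iS] that by blast
    hence "R j = R i" using imin[of j] sub[OF that]
      by (simp add: card_seteq)
    thus ?thesis by (auto simp: R_def)
  qed
  have "closed_irreducible K (R i)"
    unfolding closed_irreducible_def closed_set_def irreducible_set_def
  proof (intro conjI ballI allI impI)
    show "R i \<noteq> {}" by (auto simp: R_def)
  next
    fix j k assume "j \<in> R i" "trans_step K j k"
    thus "k \<in> R i" by (auto simp: R_def)
  next
    fix j k assume j: "j \<in> R i" and k: "k \<in> R i"
    have "(trans_step K)\<^sup>*\<^sup>* j i" using bk[OF j] by (simp add: R_def)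
    moreover have "(trans_step K)\<^sup>*\<^sup>* i k" using k by (simp add: R_def)
    ultimately show "(trans_step K)\<^sup>*\<^sup>* j k" by simp
  qed
  thus ?thesis using RS[OF iS] by blast
qed

lemma max_ci:
  fixes K :: "real^'n^'n" and x :: "real^'n"
  assumes stoch: "stochastic_matrix K" and h: "\<And>i. x$i = (\<Sum>j\<in>UNIV. K$i$j * x$j)"
  shows "\<exists>C. closed_irreducible K C \<and> (\<forall>i\<in>C. \<forall>j. x$j \<le> x$i)"
proof -
  define m where "m = Max (range (\<lambda>i. x$i))"
  have le: "x$j \<le> m" for j unfolding m_def by (rule Max_ge) auto
  have "m \<in> range (\<lambda>i. x$i)" unfolding m_def
    by (rule Max_in) auto
  hence ex: "\<exists>i. x$i = m" by auto
  define S where "S = {i. x$i = m}"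
  have "closed_set K S"
    unfolding closed_set_def
  proof (intro conjI ballI allI impI)
    show "S \<noteq> {}" using ex by (auto simp: S_def)
  next
    fix i j assume iS: "i \<in> S" and st: "trans_step K i j"
    have "(\<Sum>k\<in>UNIV. K$i$k * (m - x$k)) = m * (\<Sum>k\<in>UNIV. K$i$k) - (\<Sum>k\<in>UNIV. K$i$k * x$k)"
      by (simp add: algebra_simps sum_subtractf sum_distrib_left)
    also have "\<dots> = 0" using stoch h[of i] iS by (simp add: stochastic_matrix_def S_def)
    finally have "\<forall>k\<in>UNIV. K$i$k * (m - x$k) = 0"
      by (subst sum_nonneg_eq_0_iff[symmetric])
         (use stoch le in \<open>auto simp: stochastic_matrix_def\<close>)
    hence "K$i$j * (m - x$j) = 0" by simp
    thus "j \<in> S" using st by (simp add: trans_step_def S_def)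
  qed
  then obtain C where "C \<subseteq> S" "closed_irreducible K C" using closed_contains_ci by blast
  thus ?thesis using le by (auto simp: S_def)
qed

lemma harmonic_const:
  fixes K :: "real^'n^'n" and x :: "real^'n"
  assumes stoch: "stochastic_matrix K" and uniq: "\<exists>!C. closed_irreducible K C"
    and h: "\<And>i. x$i = (\<Sum>j\<in>UNIV. K$i$j * x$j)"
  shows "\<exists>c. \<forall>i. x$i = c"
proof -
  obtain C1 where C1: "closed_irreducible K C1" "\<forall>i\<in>C1. \<forall>j. x$j \<le> x$i"
    using max_ci[OF stoch h] by blast
  have h2: "(-x)$i = (\<Sum>j\<in>UNIV. K$i$j * (-x)$j)" for i
    using h[of i] by (simp add: sum_negf)
  obtain C2 where C2: "closed_irreducible K C2" "\<forall>i\<in>C2. \<forall>j. (-x)$j \<le> (-x)$i"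
    using max_ci[OF stoch h2] by blast
  have "C1 = C2" using uniq C1(1) C2(1) by blast
  obtain c where "c \<in> C1" using C1(1) by (auto simp: closed_irreducible_def closed_set_def)
  hence "\<forall>i. x$i = x$c" using C1(2) C2(2) \<open>C1 = C2\<close> by (metis antisym neg_le_iff_le vector_uminus_component)
  thus ?thesis by blast
qed

lemma ifm: "(if i = j then a else 0) * (b::real) = (if i = j then a * b else 0)" by simp
lemma diag_mv: "diag_mat v *v y = (\<chi> i. v$i * y$i)"
  by (simp add: vec_eq_iff diag_mat_def matrix_vector_mult_def ifm)

lemma scaleR_mv: "((c::real) *\<^sub>R (A::real^'n^'m)) *v x = c *\<^sub>R (A *v x)"
  by (simp add: vec_eq_iff matrix_vector_mult_def sum_distrib_left algebra_simps)

lemma outer_mv: "outer_prod u w *v x = (w \<bullet> x) *\<^sub>R u"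
  by (simp add: vec_eq_iff outer_prod_def matrix_vector_mult_def inner_vec_def sum_distrib_left algebra_simps)

theorem corollary3p4:
  fixes K :: "real^'n^'n" and p \<mu> :: "real^'n"
    and pbar lam :: real and \<pi> r :: "real^'n" and M :: "real^'n^'n"
  assumes stoch: "stochastic_matrix K"
    and uniq: "\<exists>!C. closed_irreducible K C"
    and stat: "stationary_distribution K \<mu>"
    and p_range: "\<forall>i. 0 < p$i \<and> p$i < 1"
  defines "pbar \<equiv> \<mu> \<bullet> p"
    and "lam \<equiv> pbar / (1 - pbar)"
    and "\<pi> \<equiv> (1 + lam) *\<^sub>R (\<mu> v* (mat 1 - diag_mat p ** K))"
    and "M \<equiv> mat 1 - K + (1 / (1 - pbar)) *\<^sub>R
               outer_prod (vec 1 - p) (\<mu> v* (diag_mat (vec 1 - p) ** K))"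
    and "r \<equiv> matrix_inv M *v p - lam *\<^sub>R vec 1"
  shows "invertible M \<and> \<pi> \<bullet> r = 0"
proof -
  define q :: "real^'n" where "q = vec 1 - p"
  define a where "a = \<mu> v* (diag_mat q ** K)"
  define c where "c = 1 / (1 - pbar)"
  have mus: "(\<Sum>i\<in>UNIV. \<mu>$i) = 1" using stat by (simp add: stationary_distribution_def)
  have mu1: "\<mu> \<bullet> 1 = 1" using mus
    by (simp add: inner_vec_def)
  have muq: "\<mu> \<bullet> q = 1 - pbar" by (simp add: q_def inner_diff_right mu1 pbar_def)
  have pos: "0 < \<mu> \<bullet> q"
  proof -
    obtain i where "\<mu>$i \<noteq> 0" using stat by (force simp: stationary_distribution_def)
    hence "0 < \<mu>$i * q$i" using stat p_range
      by (simp add: stationary_distribution_def q_def order_le_neq_trans)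
    also have "\<dots> \<le> (\<Sum>j\<in>UNIV. \<mu>$j * q$j)"
      by (rule member_le_sum) (use stat p_range in \<open>auto simp: stationary_distribution_def q_def less_imp_le\<close>)
    finally show ?thesis by (simp add: inner_vec_def)
  qed
  hence pb: "1 - pbar \<noteq> 0" using muq by simp
  have muK: "\<mu> \<bullet> (K *v x) = \<mu> \<bullet> x" for x
    using stat by (metis dot_lmul_matrix stationary_distribution_def)
  have diag_split: "\<mu> \<bullet> (diag_mat q *v z) = \<mu> \<bullet> z - \<mu> \<bullet> (diag_mat p *v z)" for z
    by (simp add: diag_mv inner_vec_def q_def algebra_simps sum_subtractf)
  have ax: "a \<bullet> x = \<mu> \<bullet> x - \<mu> \<bullet> (diag_mat p *v (K *v x))" for x
    by (simp add: a_def dot_lmul_matrix matrix_vector_mul_assoc[symmetric] diag_split muK)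
  have Mx: "M *v x = x - K *v x + c *\<^sub>R ((a \<bullet> x) *\<^sub>R q)" for x
    by (simp add: M_def c_def q_def a_def matrix_vector_mult_diff_rdistrib
        matrix_vector_mult_add_rdistrib scaleR_mv outer_mv)
  have muM: "\<mu> \<bullet> (M *v x) = a \<bullet> x" for x
    using pb by (simp add: Mx inner_diff_right inner_add_right muK muq c_def)
  have K1: "K *v 1 = 1" using stoch
    by (simp add: vec_eq_iff matrix_vector_mult_def stochastic_matrix_def)
  have "a \<bullet> 1 = \<mu> \<bullet> 1 - \<mu> \<bullet> (diag_mat p *v (K *v 1))" by (rule ax)
  also have "\<dots> = 1 - pbar" by (simp add: K1 mu1 diag_mv pbar_def)
  finally have a1: "a \<bullet> 1 = 1 - pbar" .
  have inv: "invertible M"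
  proof -
    have "\<forall>x. M *v x = 0 \<longrightarrow> x = 0"
    proof (intro allI impI)
      fix x assume M0: "M *v x = 0"
      have "a \<bullet> x = 0" using muM[of x] M0 by simp
      hence "M *v x = x - K *v x" by (simp add: Mx)
      hence Kx: "K *v x = x" using M0 by simp
      have Kx': "\<forall>i. (\<Sum>j\<in>UNIV. K$i$j * x$j) = x$i"
        using Kx by (simp add: vec_eq_iff matrix_vector_mult_def)
      have "x$i = (\<Sum>j\<in>UNIV. K$i$j * x$j)" for i
        using Kx' by simp
      then obtain x0 where x0: "\<forall>i. x$i = x0" using harmonic_const[OF stoch uniq] by blast
      hence xv: "x = x0 *\<^sub>R vec 1" by (simp add: vec_eq_iff)
      have "a \<bullet> x = x0 * (1 - pbar)"
        by (simp add: xv a1)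
      hence "x0 = 0" using \<open>a \<bullet> x = 0\<close> pb by simp
      thus "x = 0" using xv by simp
    qed
    thus ?thesis using matrix_left_invertible_ker invertible_left_inverse by blast
  qed
  have MMi: "M ** matrix_inv M = mat 1"
    using inv unfolding invertible_def matrix_inv_def by (rule someI_ex[THEN conjunct1])
  define y where "y = matrix_inv M *v p"
  have My: "M *v y = p" by (simp add: y_def matrix_vector_mul_assoc MMi)
  have ay: "a \<bullet> y = pbar" using muM[of y] My pbar_def by simp
  have piv: "\<pi> \<bullet> v = (1 + lam) * (a \<bullet> v)" for v
    by (simp add: \<pi>_def dot_lmul_matrix matrix_vector_mult_diff_rdistrib
        matrix_vector_mul_assoc[symmetric] inner_diff_right ax)
  have "\<pi> \<bullet> r = (1 + lam) * (pbar - lam * (1 - pbar))"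
    by (simp add: piv r_def y_def[symmetric] inner_diff_right ay a1 algebra_simps)
  also have "\<dots> = 0" using pb by (simp add: lam_def)
  finally show ?thesis using inv by simp
qed

end
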